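(* For every $m\in\mathbb{N}$, $\mathscr{G}^{(m)}\setminus\mathscr{G}^{(m-1)}\neq\emptyset$. In particular, if $K_{m+1}$ denotes the complete graph on $m+1$ vertices, then $K_{m+1}\in\mathscr{G}^{(m)}\setminus\mathscr{G}^{(m-1)}$.
   Context: All graphs are finite simplicial graphs (undirected, no loops, at most one edge between two vertices). Pinning: for graphs $\Gamma,\Gamma'$ and $v\in V\Gamma$, the graph $\Phi_{(\Gamma,v)}(\Gamma')$ has vertex set $V\Gamma\sqcup V\Gamma'$ and edge set $E\Gamma\sqcup E\Gamma'\sqcup\{(w,v):w\in V\Gamma'\}$ ("pinning $\Gamma'$ to $\Gamma$ at $v$"). Let $\mathscr{G}^{(0)}$ consist of the single-vertex graph. Recursively, $\mathscr{G}^{(m+1)}$ is the class of graphs obtained by repeatedly appending a graph from $\mathscr{G}^{(m)}$ to the graph built so far, each time either (1) leaving the appended graph disjoint (no edges to the previous graph), or (2) pinning the appended graph to the previous graph at some vertex. Thus $\mathscr{G}^{(1)}$ consists of graphs built by successively adding a vertex that is either isolated or adjacent to exactly one existing vertex. *)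

theory Defs
  imports Main
begin

text \<open>A finite simple graph is represented with vertex set {0..<n} and a set of
ordered pairs as (symmetric, irreflexive) edge relation.\<close>

type_synonym graph = "nat \<times> (nat \<times> nat) set"

definition wf_graph :: "graph \<Rightarrow> bool" where
  "wf_graph G \<longleftrightarrow> (\<forall>(a,b)\<in>snd G. a < fst G \<and> b < fst G \<and> a \<noteq> b \<and> (b,a) \<in> snd G)"

definition graph_iso :: "graph \<Rightarrow> graph \<Rightarrow> bool" where
  "graph_iso G H \<longleftrightarrow> (\<exists>f. bij_betw f {0..<fst G} {0..<fst H} \<and>
     (\<forall>a<fst G. \<forall>b<fst G. (a,b) \<in> snd G \<longleftrightarrow> (f a, f b) \<in> snd H))"

definition single_vertex :: graph where
  "single_vertex = (1, {})"

definition disj_union :: "graph \<Rightarrow> graph \<Rightarrow> graph" where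
  "disj_union G H = (fst G + fst H, snd G \<union> {(a + fst G, b + fst G) | a b. (a,b) \<in> snd H})"

definition pin :: "graph \<Rightarrow> nat \<Rightarrow> graph \<Rightarrow> graph" where
  "pin G v H = (fst G + fst H, snd G \<union> {(a + fst G, b + fst G) | a b. (a,b) \<in> snd H}
       \<union> {(v, w + fst G) | w. w < fst H} \<union> {(w + fst G, v) | w. w < fst H})"

inductive_set built :: "graph set \<Rightarrow> graph set" for S where
  start: "H \<in> S \<Longrightarrow> H \<in> built S"
| disj: "G \<in> built S \<Longrightarrow> H \<in> S \<Longrightarrow> disj_union G H \<in> built S"
| pinned: "G \<in> built S \<Longrightarrow> H \<in> S \<Longrightarrow> v < fst G \<Longrightarrow> pin G v H \<in> built S"

fun Gcls :: "nat \<Rightarrow> graph set" where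
  "Gcls 0 = {G. wf_graph G \<and> graph_iso G single_vertex}"
| "Gcls (Suc m) = {G. wf_graph G \<and> (\<exists>H\<in>built (Gcls m). graph_iso G H)}"

text \<open>G^(m-1), with the convention G^(-1) = empty.\<close>
definition Gprev :: "nat \<Rightarrow> graph set" where
  "Gprev m = (if m = 0 then {} else Gcls (m - 1))"

definition complete_graph :: "nat \<Rightarrow> graph" where
  "complete_graph n = (n, {(a,b). a < n \<and> b < n \<and> a \<noteq> b})"

end

theory Submission
  imports Defs
begin

definition cb :: "nat \<Rightarrow> graph \<Rightarrow> bool" where
  "cb k G \<longleftrightarrow> (\<forall>C. C \<subseteq> {0..<fst G} \<longrightarrow> (\<forall>a\<in>C. \<forall>b\<in>C. a \<noteq> b \<longrightarrow> (a,b) \<in> snd G) \<longrightarrow> card C \<le> k)"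

lemma key:
  assumes cbG: "cb (k+1) G" and cbH: "cb k H"
    and e1: "\<And>a b. a < fst G \<Longrightarrow> b < fst G \<Longrightarrow> (a,b) \<in> E \<Longrightarrow> (a,b) \<in> snd G"
    and e2: "\<And>a b. a < fst H \<Longrightarrow> b < fst H \<Longrightarrow> (a + fst G, b + fst G) \<in> E \<Longrightarrow> (a,b) \<in> snd H"
    and e3: "\<And>a b. a < fst G \<Longrightarrow> b < fst H \<Longrightarrow> (a, b + fst G) \<in> E \<Longrightarrow> a = v"
  shows "cb (k+1) (fst G + fst H, E)"
  unfolding cb_def
proof (intro allI impI)
  fix C assume Cs: "C \<subseteq> {0..<fst (fst G + fst H, E)}"
    and cl: "\<forall>a\<in>C. \<forall>b\<in>C. a \<noteq> b \<longrightarrow> (a, b) \<in> snd (fst G + fst H, E)"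
  define n where "n = fst G"
  define h where "h = fst H"
  have Cs': "C \<subseteq> {0..<n+h}" using Cs by (simp add: n_def h_def)
  have cl': "\<And>a b. a \<in> C \<Longrightarrow> b \<in> C \<Longrightarrow> a \<noteq> b \<Longrightarrow> (a,b) \<in> E" using cl by auto
  have finC: "finite C" using Cs' finite_subset by blast
  define C1 where "C1 = C \<inter> {0..<n}"
  define C2 where "C2 = C - {0..<n}"
  define D where "D = (\<lambda>x. x - n) ` C2"
  have c1: "card C1 \<le> k+1"
    using cbG unfolding cb_def
    apply (elim allE[of _ C1])
    using cl' e1 by (auto simp: C1_def n_def)
  have injD: "inj_on (\<lambda>x. x - n) C2" by (auto simp: C2_def inj_on_def)
  have cardD: "card D = card C2" unfolding D_def using injD by (simp add: card_image)
  have Dsub: "D \<subseteq> {0..<h}" using Cs' by (auto simp: D_def C2_def)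
  have Dcl: "\<forall>a\<in>D. \<forall>b\<in>D. a \<noteq> b \<longrightarrow> (a, b) \<in> snd H"
  proof (intro ballI impI)
    fix x y assume "x \<in> D" "y \<in> D" "x \<noteq> y"
    then obtain a b where ab: "a \<in> C2" "b \<in> C2" "x = a - n" "y = b - n" by (auto simp: D_def)
    have "a \<ge> n" "b \<ge> n" using ab by (auto simp: C2_def)
    hence "a = x + n" "b = y + n" using ab by auto
    moreover have "(a,b) \<in> E" using cl' ab \<open>x \<noteq> y\<close> by (auto simp: C2_def)
    moreover have "x < h" "y < h" using Dsub \<open>x \<in> D\<close> \<open>y \<in> D\<close> by auto
    ultimately show "(x,y) \<in> snd H" using e2 by (auto simp: n_def h_def)
  qed
  have "card D \<le> k" using cbH Dsub Dcl unfolding cb_def h_def by blast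
  hence c2: "card C2 \<le> k" using cardD by simp
  have cC: "card C = card C1 + card C2"
    unfolding C1_def C2_def using finC
    by (metis Int_Diff_Un Int_Diff_disjoint card_Un_disjoint finite_Diff finite_Int)
  show "card C \<le> k+1"
  proof (cases "C2 = {}")
    case True then show ?thesis using cC c1 by simp
  next
    case False
    then obtain b where b: "b \<in> C2" by auto
    have "C1 \<subseteq> {v}"
    proof
      fix a assume a: "a \<in> C1"
      have "a \<noteq> b" "a < n" "b \<ge> n" "b < n + h" using a b Cs' by (auto simp: C1_def C2_def)
      hence "(a, (b - n) + n) \<in> E" using cl' a b by (auto simp: C1_def C2_def)
      moreover have "b - n < fst H" "a < fst G" using \<open>a < n\<close> \<open>b \<ge> n\<close> \<open>b < n + h\<close> by (auto simp: n_def h_def)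
      ultimately have "a = v" using e3[of a "b - n"] by (simp add: n_def)
      thus "a \<in> {v}" by simp
    qed
    hence "card C1 \<le> card {v}" by (intro card_mono) auto
    hence "card C1 \<le> 1" by simp
    then show ?thesis using cC c2 by simp
  qed
qed

lemma wfD: "wf_graph G \<Longrightarrow> (a,b) \<in> snd G \<Longrightarrow> a < fst G \<and> b < fst G \<and> a \<noteq> b \<and> (b,a) \<in> snd G"
  unfolding wf_graph_def by blast

lemma disj_e1: "a < fst G \<Longrightarrow> b < fst G \<Longrightarrow> (a,b) \<in> snd (disj_union G H) \<Longrightarrow> (a,b) \<in> snd G"
  unfolding disj_union_def by auto
lemma disj_e2: "wf_graph G \<Longrightarrow> (a + fst G, b + fst G) \<in> snd (disj_union G H) \<Longrightarrow> (a,b) \<in> snd H"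
  unfolding disj_union_def by (auto dest: wfD)
lemma disj_e3: "wf_graph G \<Longrightarrow> a < fst G \<Longrightarrow> (a, b + fst G) \<in> snd (disj_union G H) \<Longrightarrow> False"
  unfolding disj_union_def by (auto dest: wfD)
lemma pin_e1: "a < fst G \<Longrightarrow> b < fst G \<Longrightarrow> (a,b) \<in> snd (pin G v H) \<Longrightarrow> (a,b) \<in> snd G"
  unfolding pin_def by auto
lemma pin_e2: "wf_graph G \<Longrightarrow> v < fst G \<Longrightarrow> (a + fst G, b + fst G) \<in> snd (pin G v H) \<Longrightarrow> (a,b) \<in> snd H"
  unfolding pin_def by (auto dest: wfD)
lemma pin_e3: "wf_graph G \<Longrightarrow> a < fst G \<Longrightarrow> (a, b + fst G) \<in> snd (pin G v H) \<Longrightarrow> a = v"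
  unfolding pin_def by (auto dest: wfD)
lemma wf_disj: "wf_graph G \<Longrightarrow> wf_graph H \<Longrightarrow> wf_graph (disj_union G H)"
  unfolding wf_graph_def disj_union_def by fastforce

lemma wf_pin: "wf_graph G \<Longrightarrow> wf_graph H \<Longrightarrow> v < fst G \<Longrightarrow> wf_graph (pin G v H)"
  unfolding wf_graph_def pin_def by fastforce

lemma cb_mono: "cb k G \<Longrightarrow> cb (k+1) G"
  unfolding cb_def by (auto intro: le_SucI)

lemma built_inv:
  assumes "\<And>H. H \<in> S \<Longrightarrow> wf_graph H \<and> cb k H"
  shows "G \<in> built S \<Longrightarrow> wf_graph G \<and> cb (k+1) G"
proof (induction G rule: built.induct)
  case (start H)
  then show ?case using assms cb_mono by blast
next
  case (disj G H)
  have H: "wf_graph H" "cb k H" using assms disj.hyps(2) by auto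
  have G: "wf_graph G" "cb (k+1) G" using disj.IH by auto
  have "cb (k+1) (fst G + fst H, snd (disj_union G H))"
  proof (rule key[OF G(2) H(2), where v=0])
    fix a b assume "a < fst G" "b < fst G" "(a, b) \<in> snd (disj_union G H)"
    then show "(a, b) \<in> snd G" by (rule disj_e1)
  next
    fix a b assume "(a + fst G, b + fst G) \<in> snd (disj_union G H)"
    then show "(a, b) \<in> snd H" by (rule disj_e2[OF G(1)])
  next
    fix a b assume "a < fst G" "(a, b + fst G) \<in> snd (disj_union G H)"
    then show "a = 0" using disj_e3[OF G(1)] by blast
  qed
  moreover have "disj_union G H = (fst G + fst H, snd (disj_union G H))" by (simp add: disj_union_def)
  ultimately show ?case using wf_disj[OF G(1) H(1)] by metis
next
  case (pinned G H v)
  have H: "wf_graph H" "cb k H" using assms pinned.hyps(2) by auto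
  have G: "wf_graph G" "cb (k+1) G" using pinned.IH by auto
  have "cb (k+1) (fst G + fst H, snd (pin G v H))"
  proof (rule key[OF G(2) H(2), where v=v])
    fix a b assume "a < fst G" "b < fst G" "(a, b) \<in> snd (pin G v H)"
    then show "(a, b) \<in> snd G" by (rule pin_e1)
  next
    fix a b assume "(a + fst G, b + fst G) \<in> snd (pin G v H)"
    then show "(a, b) \<in> snd H" by (rule pin_e2[OF G(1) pinned.hyps(3)])
  next
    fix a b assume "a < fst G" "(a, b + fst G) \<in> snd (pin G v H)"
    then show "a = v" by (rule pin_e3[OF G(1)])
  qed
  moreover have "pin G v H = (fst G + fst H, snd (pin G v H))" by (simp add: pin_def)
  ultimately show ?case using wf_pin[OF G(1) H(1) pinned.hyps(3)] by metis
qed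

lemma iso_cb:
  assumes "graph_iso G H" "cb j H" shows "cb j G"
proof -
  obtain f where f: "bij_betw f {0..<fst G} {0..<fst H}"
    "\<forall>a<fst G. \<forall>b<fst G. (a,b) \<in> snd G \<longleftrightarrow> (f a, f b) \<in> snd H"
    using assms(1) unfolding graph_iso_def by blast
  show ?thesis unfolding cb_def
  proof (intro allI impI)
    fix C assume Cs: "C \<subseteq> {0..<fst G}" and cl: "\<forall>a\<in>C. \<forall>b\<in>C. a \<noteq> b \<longrightarrow> (a, b) \<in> snd G"
    have inj: "inj_on f C" using f(1) Cs by (meson bij_betw_def inj_on_subset)
    have "f ` C \<subseteq> {0..<fst H}" using f(1) Cs by (auto simp: bij_betw_def)
    moreover have "\<forall>a\<in>f`C. \<forall>b\<in>f`C. a \<noteq> b \<longrightarrow> (a, b) \<in> snd H"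
    proof (intro ballI impI)
      fix x y assume "x \<in> f`C" "y \<in> f`C" "x \<noteq> y"
      then obtain a b where ab: "a \<in> C" "b \<in> C" "x = f a" "y = f b" by blast
      have "a \<noteq> b" using ab \<open>x \<noteq> y\<close> by blast
      hence "(a,b) \<in> snd G" using cl ab by blast
      moreover have "a < fst G" "b < fst G" using ab Cs by auto
      ultimately show "(x,y) \<in> snd H" using f(2) ab by blast
    qed
    ultimately have "card (f ` C) \<le> j" using assms(2) unfolding cb_def by blast
    thus "card C \<le> j" using card_image[OF inj] by simp
  qed
qed

lemma Gcls_inv: "G \<in> Gcls m \<Longrightarrow> wf_graph G \<and> cb (m+1) G"
proof (induction m arbitrary: G)
  case 0
  have "\<exists>f. bij_betw f {0..<fst G} {0..<fst single_vertex}"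
    using 0 by (auto simp: graph_iso_def)
  then obtain f where f: "bij_betw f {0..<fst G} {0..<fst single_vertex}" by blast
  hence "card {0..<fst G} = card {0..<fst single_vertex}" by (rule bij_betw_same_card)
  hence "fst G = 1" by (simp add: single_vertex_def)
  have "cb 1 G" unfolding cb_def
  proof (intro allI impI)
    fix C assume "C \<subseteq> {0..<fst G}"
    hence "card C \<le> card {0..<fst G}" by (intro card_mono) auto
    thus "card C \<le> 1" using \<open>fst G = 1\<close> by simp
  qed
  then show ?case using 0 by simp
next
  case (Suc m)
  then obtain H where "wf_graph G" "H \<in> built (Gcls m)" "graph_iso G H" by auto
  moreover have "wf_graph H \<and> cb (m+2) H"
    using built_inv[of "Gcls m" "m+1"] Suc.IH calculation by auto
  ultimately show ?case using iso_cb by auto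
qed

lemma iso_refl: "graph_iso G G"
  unfolding graph_iso_def by (rule exI[of _ id]) auto


lemma sv_in: "single_vertex \<in> Gcls m"
proof -
  have w: "wf_graph single_vertex" by (simp add: wf_graph_def single_vertex_def)
  show ?thesis
  proof (induction m)
    case 0 then show ?case using w iso_refl[of single_vertex] by simp
  next
    case (Suc j)
    have "single_vertex \<in> built (Gcls j)" by (rule built.start[OF Suc])
    then show ?case using w iso_refl[of single_vertex] by auto
  qed
qed

lemma pin_complete: "pin single_vertex 0 (complete_graph n) = complete_graph (Suc n)"
  unfolding pin_def single_vertex_def complete_graph_def
  apply (simp add: set_eq_iff)
  apply (intro allI iffI)
   apply (elim disjE exE conjE; simp)
  apply (case_tac a; case_tac b; auto)
  done

lemma complete_in: "complete_graph (m+1) \<in> Gcls m"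
proof (induction m)
  case 0
  have "complete_graph 1 = single_vertex" by (auto simp: complete_graph_def single_vertex_def)
  then show ?case using sv_in[of 0] by simp
next
  case (Suc j)
  have "pin single_vertex 0 (complete_graph (j+1)) \<in> built (Gcls j)"
    by (rule built.pinned[OF built.start[OF sv_in] Suc]) (simp add: single_vertex_def)
  hence b: "complete_graph (Suc j + 1) \<in> built (Gcls j)" using pin_complete[of "j+1"] by simp
  have w: "wf_graph (complete_graph (Suc j + 1))" by (auto simp: wf_graph_def complete_graph_def)
  show ?case using b w iso_refl[of "complete_graph (Suc j + 1)"]
    by (simp only: Gcls.simps mem_Collect_eq) blast
qed

theorem proposition2p7:
  fixes m :: nat
  shows "Gcls m - Gprev m \<noteq> {} \<and> complete_graph (m + 1) \<in> Gcls m - Gprev m"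
proof -
  have "complete_graph (m + 1) \<notin> Gprev m"
  proof (cases m)
    case 0 then show ?thesis by (simp add: Gprev_def)
  next
    case (Suc j)
    have "\<not> cb (j+1) (complete_graph (m+1))"
    proof
      assume "cb (j+1) (complete_graph (m+1))"
      moreover have "{0..<m+1} \<subseteq> {0..<fst (complete_graph (m+1))}" by (simp add: complete_graph_def)
      moreover have "\<forall>a\<in>{0..<m+1}. \<forall>b\<in>{0..<m+1}. a \<noteq> b \<longrightarrow> (a, b) \<in> snd (complete_graph (m+1))"
        by (simp add: complete_graph_def)
      ultimately have "card {0..<m+1} \<le> j+1" unfolding cb_def by blast
      thus False using Suc by simp
    qed
    then show ?thesis using Gcls_inv[of "complete_graph (m+1)" j] Suc by (auto simp: Gprev_def)
  qed
  then show ?thesis using complete_in[of m] by blast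
qed

end
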